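(* Let $\alpha_1,\ldots,\alpha_t\in\mathbb{T}$ and $\varepsilon>0$. Then: (1) there exists a positive integer $M$ such that for every $\beta\in\mathbb{T}$, if $\|\beta H_\varepsilon(\alpha_1,\ldots,\alpha_t)\|\le 1/6$ then $\beta\in\langle\alpha_1,\ldots,\alpha_t\rangle_M$; (2) for such an $M$ and every open set $V\subseteq\mathbb{T}$ with $V\supseteq\langle\alpha_1,\ldots,\alpha_t\rangle_M$, there exists a positive integer $N$ such that for every $\beta\in\mathbb{T}$, if $\|\beta H_{N,\varepsilon}(\alpha_1,\ldots,\alpha_t)\|\le 1/6$ then $\beta\in V$.
   Context: $\mathbb{T}=\mathbb{R}/\mathbb{Z}$; $\|x\|$ is the distance from $x$ to the nearest integer. Bohr sets: $H_\varepsilon(\alpha_1,\ldots,\alpha_t)=\{n\in\mathbb{N}: \|n\alpha_1\|,\ldots,\|n\alpha_t\|\le\varepsilon\}$ and $H_{N,\varepsilon}(\alpha_1,\ldots,\alpha_t)=\{n\in\mathbb{N}, n\le N: \|n\alpha_1\|,\ldots,\|n\alpha_t\|\le\varepsilon\}$. For $M\in\mathbb{N}$, $\langle\alpha_1,\ldots,\alpha_t\rangle_M=\{k_1\alpha_1+\cdots+k_t\alpha_t: k_i\in\mathbb{Z},\ |k_1|,\ldots,|k_t|\le M\}$. For $\beta\in\mathbb{T}$ and $S\subseteq\mathbb{N}$, $\|\beta S\|=\sup\{\|n\beta\|: n\in S\}$. *)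

theory Defs
  imports Complex_Main
begin

text \<open>The circle T = R/Z is modelled by real representatives; subsets of T are modelled
  by their (1-periodic) preimages in R.\<close>

definition normT :: "real \<Rightarrow> real" where
  "normT x = \<bar>x - of_int (round x)\<bar>"

definition bohr :: "nat \<Rightarrow> (nat \<Rightarrow> real) \<Rightarrow> real \<Rightarrow> nat set" where
  "bohr t \<alpha> \<epsilon> = {n. n \<ge> 1 \<and> (\<forall>i<t. normT (real n * \<alpha> i) \<le> \<epsilon>)}"

definition bohrN :: "nat \<Rightarrow> (nat \<Rightarrow> real) \<Rightarrow> nat \<Rightarrow> real \<Rightarrow> nat set" where
  "bohrN t \<alpha> N \<epsilon> = {n \<in> bohr t \<alpha> \<epsilon>. n \<le> N}"

text \<open>Preimage in R of <alpha_1..alpha_t>_M \<subseteq> T.\<close>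
definition genM :: "nat \<Rightarrow> (nat \<Rightarrow> real) \<Rightarrow> nat \<Rightarrow> real set" where
  "genM t \<alpha> M = {x. \<exists>k :: nat \<Rightarrow> int. (\<forall>i<t. \<bar>k i\<bar> \<le> int M) \<and>
                       x - (\<Sum>i<t. of_int (k i) * \<alpha> i) \<in> \<int>}"

text \<open>||beta S|| <= c, i.e. sup{||n beta|| : n in S} <= c (with sup of empty set = 0).\<close>
definition normS_le :: "real \<Rightarrow> nat set \<Rightarrow> real \<Rightarrow> bool" where
  "normS_le \<beta> S c \<longleftrightarrow> (\<forall>n\<in>S. normT (real n * \<beta>) \<le> c)"

text \<open>Open subsets of T = open 1-periodic subsets of R.\<close>
definition openT :: "real set \<Rightarrow> bool" where
  "openT V \<longleftrightarrow> open V \<and> (\<forall>x. x \<in> V \<longleftrightarrow> x + 1 \<in> V)"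

end

theory Submission imports Defs "HOL-Analysis.Analysis" begin

lemma normT_nonneg: "normT y \<ge> 0" by (simp add: normT_def)

lemma normT_le_half: "normT y \<le> 1/2"
proof -
  have b: "of_int \<lfloor>y + 1/2\<rfloor> \<le> y + 1/2" "y + 1/2 < of_int \<lfloor>y + 1/2\<rfloor> + 1"
    by linarith+
  show ?thesis unfolding normT_def round_def abs_le_iff using b by linarith
qed

lemma normT_le_int: "normT x \<le> \<bar>x - of_int j\<bar>"
  unfolding normT_def by (rule round_diff_minimal)

lemma cos_normT: "cos (2*pi*y) = cos (2*pi*normT y)"
proof -
  define w where "w = y - of_int (round y)"
  have "cos (2*pi*y) = cos (2*pi*w + of_int (round y) * (2 * pi))"
    by (simp add: w_def algebra_simps)
  also have "\<dots> = cos (2*pi*w)" using cos.plus_of_int[of "2*pi*w" "round y"] by simp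
  also have "\<dots> = cos \<bar>2*pi*w\<bar>" by (simp add: cos_abs_real)
  also have "\<bar>2*pi*w\<bar> = 2*pi*normT y" by (simp add: w_def normT_def abs_mult)
  finally show ?thesis .
qed

lemma cos_normT_ge:
  assumes "normT y \<le> a" "a \<le> 1/2"
  shows "cos (2*pi*y) \<ge> cos (2*pi*a)"
  unfolding cos_normT[of y]
  by (rule cos_monotone_0_pi_le) (use assms normT_nonneg[of y] in auto)

lemma cos_normT_less:
  assumes "a < normT y" "0 \<le> a"
  shows "cos (2*pi*y) < cos (2*pi*a)"
  unfolding cos_normT[of y]
  by (rule cos_monotone_0_pi) (use assms normT_le_half[of y] in auto)

lemma normT_sixth_iff: "normT y \<le> 1/6 \<longleftrightarrow> cos (2*pi*y) \<ge> 1/2"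
proof -
  have c: "cos (2*pi*(1/6)) = 1/2" using cos_60 by (simp add: field_simps)
  show ?thesis
  proof
    assume "normT y \<le> 1/6" then show "cos (2*pi*y) \<ge> 1/2"
      using cos_normT_ge[of y "1/6"] c by auto
  next
    assume h: "cos (2*pi*y) \<ge> 1/2"
    show "normT y \<le> 1/6"
    proof (rule ccontr)
      assume "\<not> normT y \<le> 1/6"
      then have "cos (2*pi*y) < cos (2*pi*(1/6))" by (intro cos_normT_less) auto
      with h c show False by simp
    qed
  qed
qed

lemma cis_eq_1_int: "cis (2*pi*g) = 1 \<Longrightarrow> g \<in> \<int>"
proof -
  assume "cis (2*pi*g) = 1"
  then have "cos (2*pi*g) = 1" by (metis cis.sel(1) one_complex.sel(1))
  then obtain k where "2*pi*g = real_of_int k * 2 * pi" using cos_one_2pi_int by blast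
  then have "g = of_int k" by simp
  then show ?thesis by simp
qed

definition ev :: "(complex \<times> real) list \<Rightarrow> nat \<Rightarrow> complex" where
  "ev L n = (\<Sum>p\<leftarrow>L. fst p * cis (2*pi*real n* snd p))"

definition mulL :: "(complex \<times> real) list \<Rightarrow> (complex \<times> real) list \<Rightarrow> (complex \<times> real) list" where
  "mulL L1 L2 = concat (map (\<lambda>p. map (\<lambda>q. (fst p * fst q, snd p + snd q)) L2) L1)"

lemma ev_Nil[simp]: "ev [] n = 0" by (simp add: ev_def)
lemma ev_Cons[simp]: "ev (p # L) n = fst p * cis (2*pi*real n* snd p) + ev L n" by (simp add: ev_def)
lemma ev_append[simp]: "ev (L1 @ L2) n = ev L1 n + ev L2 n" by (simp add: ev_def)

lemma ev_map_shift: "ev (map (\<lambda>q. (c * fst q, a + snd q)) L) n = c * cis (2*pi*real n*a) * ev L n"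
proof (induction L)
  case Nil then show ?case by simp
next
  case (Cons q L)
  have "cis (2*pi*real n*(a + snd q)) = cis (2*pi*real n*a) * cis (2*pi*real n* snd q)"
    by (simp add: cis_mult algebra_simps)
  then show ?case using Cons by (simp add: algebra_simps)
qed

lemma ev_mulL: "ev (mulL L1 L2) n = ev L1 n * ev L2 n"
proof (induction L1)
  case Nil then show ?case by (simp add: mulL_def)
next
  case (Cons p L1)
  have "mulL (p # L1) L2 = map (\<lambda>q. (fst p * fst q, snd p + snd q)) L2 @ mulL L1 L2"
    by (simp add: mulL_def)
  then show ?case using Cons ev_map_shift[of "fst p" "snd p" L2 n] by (simp add: algebra_simps)
qed

lemma mulL_freq: "p \<in> set (mulL L1 L2) \<Longrightarrow> \<exists>p1\<in>set L1. \<exists>p2\<in>set L2. snd p = snd p1 + snd p2"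
  unfolding mulL_def by auto (metis snd_conv)

definition G :: "real \<Rightarrow> real" where "G y = (1 + cos (2*pi*y)) / 2"

lemma G_ev: "ev [(1/2, 0), (1/4, a), (1/4, -a)] n = complex_of_real (G (real n * a))"
  by (simp add: complex_eq_iff G_def algebra_simps)

lemma G_pow_ev:
  "\<exists>L. (\<forall>n. ev L n = complex_of_real (G (real n * a) ^ m)) \<and>
       (\<forall>p\<in>set L. \<exists>j::int. \<bar>j\<bar> \<le> int m \<and> snd p = of_int j * a)"
proof (induction m)
  case 0
  show ?case by (rule exI[of _ "[(1,0)]"]) auto
next
  case (Suc m)
  then obtain L where L: "\<forall>n. ev L n = complex_of_real (G (real n * a) ^ m)"
    "\<forall>p\<in>set L. \<exists>j::int. \<bar>j\<bar> \<le> int m \<and> snd p = of_int j * a" by blast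
  define L' where "L' = mulL [(1/2, 0), (1/4, a), (1/4, -a)] L"
  have "ev L' n = complex_of_real (G (real n * a) ^ Suc m)" for n
    unfolding L'_def ev_mulL G_ev using L(1) by simp
  moreover have "\<exists>j::int. \<bar>j\<bar> \<le> int (Suc m) \<and> snd p = of_int j * a" if pL: "p \<in> set L'" for p
  proof -
    obtain p1 p2 where p12: "p1 \<in> set [(1/2::complex, 0), (1/4, a), (1/4, -a)]" "p2 \<in> set L" "snd p = snd p1 + snd p2"
      using mulL_freq[OF pL[unfolded L'_def]] by blast
    obtain j where j: "\<bar>j\<bar> \<le> int m" "snd p2 = of_int j * a" using L(2) p12(2) by blast
    from p12(1) have "p1 = (1/2,0) \<or> p1 = (1/4,a) \<or> p1 = (1/4,-a)" by auto
    then show ?thesis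
    proof (elim disjE)
      assume "p1 = (1/2,0)" then show ?thesis using j p12 by (intro exI[of _ j]) auto
    next
      assume "p1 = (1/4,a)" then show ?thesis using j p12 by (intro exI[of _ "j+1"]) (auto simp: algebra_simps)
    next
      assume "p1 = (1/4,-a)" then show ?thesis using j p12 by (intro exI[of _ "j-1"]) (auto simp: algebra_simps)
    qed
  qed
  ultimately show ?case by blast
qed

lemma phi_ev:
  "\<exists>L. (\<forall>n. ev L n = complex_of_real (\<Prod>i<t. G (real n * \<alpha> i) ^ m)) \<and>
       (\<forall>p\<in>set L. \<exists>k::nat\<Rightarrow>int. (\<forall>i<t. \<bar>k i\<bar> \<le> int m) \<and> snd p = (\<Sum>i<t. of_int (k i) * \<alpha> i))"
proof (induction t)
  case 0
  show ?case by (rule exI[of _ "[(1,0)]"]) auto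
next
  case (Suc t)
  then obtain L where L: "\<forall>n. ev L n = complex_of_real (\<Prod>i<t. G (real n * \<alpha> i) ^ m)"
    "\<forall>p\<in>set L. \<exists>k::nat\<Rightarrow>int. (\<forall>i<t. \<bar>k i\<bar> \<le> int m) \<and> snd p = (\<Sum>i<t. of_int (k i) * \<alpha> i)"
    by blast
  obtain L1 where L1: "\<forall>n. ev L1 n = complex_of_real (G (real n * \<alpha> t) ^ m)"
    "\<forall>p\<in>set L1. \<exists>j::int. \<bar>j\<bar> \<le> int m \<and> snd p = of_int j * \<alpha> t"
    using G_pow_ev by blast
  define L' where "L' = mulL L L1"
  have "ev L' n = complex_of_real (\<Prod>i<Suc t. G (real n * \<alpha> i) ^ m)" for n
    unfolding L'_def ev_mulL using L(1) L1(1) by simp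
  moreover have "\<exists>k::nat\<Rightarrow>int. (\<forall>i<Suc t. \<bar>k i\<bar> \<le> int m) \<and> snd p = (\<Sum>i<Suc t. of_int (k i) * \<alpha> i)"
    if pL: "p \<in> set L'" for p
  proof -
    obtain p1 p2 where p12: "p1 \<in> set L" "p2 \<in> set L1" "snd p = snd p1 + snd p2"
      using mulL_freq[OF pL[unfolded L'_def]] by blast
    obtain k where k: "\<forall>i<t. \<bar>k i\<bar> \<le> int m" "snd p1 = (\<Sum>i<t. of_int (k i) * \<alpha> i)"
      using L(2) p12(1) by blast
    obtain j where j: "\<bar>j\<bar> \<le> int m" "snd p2 = of_int j * \<alpha> t" using L1(2) p12(2) by blast
    define k' where "k' = k(t := j)"
    have "(\<Sum>i<t. of_int (k' i) * \<alpha> i) = (\<Sum>i<t. of_int (k i) * \<alpha> i)"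
      by (rule sum.cong) (auto simp: k'_def)
    then have "snd p = (\<Sum>i<Suc t. of_int (k' i) * \<alpha> i)"
      using p12(3) k(2) j(2) by (simp add: k'_def)
    moreover have "\<forall>i<Suc t. \<bar>k' i\<bar> \<le> int m" using k(1) j(1) by (auto simp: k'_def less_Suc_eq)
    ultimately show ?thesis by blast
  qed
  ultimately show ?case by blast
qed

lemma geom_bound:
  assumes "g \<notin> \<int>"
  shows "cmod (\<Sum>n<N. cis (2*pi*real n*g)) \<le> 2 / cmod (1 - cis (2*pi*g))"
proof -
  define z where "z = cis (2*pi*g)"
  have z1: "z \<noteq> 1" using assms cis_eq_1_int unfolding z_def by blast
  have "(\<Sum>n<N. cis (2*pi*real n*g)) = (\<Sum>n<N. z ^ n)"
    by (intro sum.cong refl) (simp only: z_def Complex.DeMoivre, simp add: algebra_simps)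
  also have "\<dots> = (1 - z ^ N) / (1 - z)" using z1 by (simp add: sum_gp_strict)
  finally have eq: "(\<Sum>n<N. cis (2*pi*real n*g)) = (1 - z ^ N) / (1 - z)" .
  have "cmod (1 - z ^ N) \<le> 2"
  proof -
    have "cmod (1 - z ^ N) \<le> cmod 1 + cmod (z ^ N)" by (rule norm_triangle_ineq4)
    also have "cmod (z ^ N) = 1" by (simp add: z_def norm_power)
    finally show ?thesis by simp
  qed
  moreover have "cmod (1 - z) > 0" using z1 by simp
  ultimately show ?thesis unfolding eq z_def[symmetric] norm_divide
    by (simp add: divide_right_mono)
qed

lemma corr_bound:
  assumes "\<forall>p\<in>set L. snd p - \<beta> \<notin> \<int>"
  shows "cmod (\<Sum>n<N. ev L n * cis (- (2*pi*real n*\<beta>))) \<le>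
         (\<Sum>p\<leftarrow>L. cmod (fst p) * (2 / cmod (1 - cis (2*pi*(snd p - \<beta>)))))"
  using assms
proof (induction L)
  case Nil then show ?case by simp
next
  case (Cons p L)
  have e: "(\<Sum>n<N. ev (p # L) n * cis (- (2*pi*real n*\<beta>))) =
        fst p * (\<Sum>n<N. cis (2*pi*real n*(snd p - \<beta>))) + (\<Sum>n<N. ev L n * cis (- (2*pi*real n*\<beta>)))"
  proof -
    have "ev (p # L) n * cis (- (2*pi*real n*\<beta>)) =
          fst p * cis (2*pi*real n*(snd p - \<beta>)) + ev L n * cis (- (2*pi*real n*\<beta>))" for n
      by (simp add: algebra_simps cis_mult)
    then show ?thesis by (simp add: sum.distrib sum_distrib_left)
  qed
  have "cmod (fst p * (\<Sum>n<N. cis (2*pi*real n*(snd p - \<beta>)))) \<le>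
        cmod (fst p) * (2 / cmod (1 - cis (2*pi*(snd p - \<beta>))))"
    unfolding norm_mult using Cons.prems by (intro mult_left_mono geom_bound) auto
  moreover have "cmod (\<Sum>n<N. ev L n * cis (- (2*pi*real n*\<beta>))) \<le>
         (\<Sum>p\<leftarrow>L. cmod (fst p) * (2 / cmod (1 - cis (2*pi*(snd p - \<beta>)))))"
    using Cons by simp
  ultimately show ?case unfolding e by (simp add: norm_triangle_le)
qed

lemma floor_eq_close:
  fixes x y :: real
  assumes "K > 0" "\<lfloor>K * x\<rfloor> = \<lfloor>K * y\<rfloor>"
  shows "\<bar>x - y\<bar> < 1 / K"
proof -
  have "\<bar>K * x - K * y\<bar> < 1" using assms(2) by linarith
  then have "K * \<bar>x - y\<bar> < 1" using assms(1) by (simp add: abs_mult right_diff_distrib[symmetric])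
  then show ?thesis using assms(1) by (simp add: field_simps)
qed

lemma pigeon_count:
  fixes K :: nat and \<alpha> :: "nat \<Rightarrow> real"
  assumes K: "K \<ge> 1"
  shows "real (card {n \<in> {1..<N}. \<forall>i<t. normT (real n * \<alpha> i) \<le> 1 / real K}) \<ge> real N / real K ^ t - 1"
proof (cases "N = 0")
  case True then show ?thesis by simp
next
  case False
  define Good where "Good = {n \<in> {1..<N}. \<forall>i<t. normT (real n * \<alpha> i) \<le> 1 / real K}"
  define cell where "cell n = restrict (\<lambda>i. nat \<lfloor>real K * frac (real n * \<alpha> i)\<rfloor>) {..<t}" for n :: nat
  define S where "S = PiE {..<t} (\<lambda>_. {..<K})"
  define fib where "fib c = {n \<in> {..<N}. cell n = c}" for c
  have finS: "finite S" unfolding S_def by (intro finite_PiE) auto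
  have cardS: "card S = K ^ t" unfolding S_def by (simp add: card_PiE)
  have Kpos: "real K > 0" using K by simp
  have cellS: "cell n \<in> S" for n
  proof -
    have "nat \<lfloor>real K * frac (real n * \<alpha> i)\<rfloor> < K" for i
    proof -
      have "real K * frac (real n * \<alpha> i) < real K" using Kpos frac_lt_1 by simp
      then have "\<lfloor>real K * frac (real n * \<alpha> i)\<rfloor> < int K" by (simp add: floor_less_iff)
      moreover have "0 \<le> \<lfloor>real K * frac (real n * \<alpha> i)\<rfloor>" by (simp add: frac_ge_0)
      ultimately show ?thesis by (simp add: nat_less_iff)
    qed
    then show ?thesis unfolding cell_def S_def by auto
  qed
  have "{..<N} \<subseteq> (\<Union>c\<in>S. fib c)" using cellS unfolding fib_def by auto
  then have "card {..<N} \<le> card (\<Union>c\<in>S. fib c)"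
    by (intro card_mono) (auto simp: fib_def finS)
  also have "\<dots> \<le> (\<Sum>c\<in>S. card (fib c))" using finS by (rule card_UN_le)
  finally have Nle: "real N \<le> (\<Sum>c\<in>S. real (card (fib c)))"
    by (metis card_lessThan of_nat_le_iff of_nat_sum)
  have "\<exists>c\<in>S. real (card (fib c)) \<ge> real N / real K ^ t"
  proof (rule ccontr)
    assume "\<not> ?thesis"
    then have lt: "\<forall>c\<in>S. real (card (fib c)) < real N / real K ^ t" by auto
    have "S \<noteq> {}" using cellS by blast
    then have "(\<Sum>c\<in>S. real (card (fib c))) < (\<Sum>c\<in>S. real N / real K ^ t)"
      using finS lt by (intro sum_strict_mono) auto
    also have "\<dots> = real N" using cardS Kpos by simp
    finally show False using Nle by simp
  qed
  then obtain c where cS: "c \<in> S" and cF: "real (card (fib c)) \<ge> real N / real K ^ t" by blast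
  define F where "F = fib c"
  have finF: "finite F" unfolding F_def fib_def by auto
  have "real N / real K ^ t > 0" using False Kpos by simp
  then have "F \<noteq> {}" using cF unfolding F_def by auto
  define n1 where "n1 = Min F"
  have n1F: "n1 \<in> F" unfolding n1_def using finF \<open>F \<noteq> {}\<close> by simp
  have n1le: "n1 \<le> n" if "n \<in> F" for n unfolding n1_def using finF that by simp
  have sub: "(\<lambda>n. n - n1) ` (F - {n1}) \<subseteq> Good"
  proof
    fix x assume "x \<in> (\<lambda>n. n - n1) ` (F - {n1})"
    then obtain n where nF: "n \<in> F" "n \<noteq> n1" and x: "x = n - n1" by auto
    have nlt: "n < N" using nF unfolding F_def fib_def by auto
    have "n1 < n" using n1le[OF nF(1)] nF(2) by simp
    then have x1: "x \<ge> 1" "x < N" using x nlt by auto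
    have "normT (real x * \<alpha> i) \<le> 1 / real K" if i: "i < t" for i
    proof -
      have "cell n i = cell n1 i" using nF n1F unfolding F_def fib_def by auto
      then have e1: "nat \<lfloor>real K * frac (real n * \<alpha> i)\<rfloor> = nat \<lfloor>real K * frac (real n1 * \<alpha> i)\<rfloor>"
        using i unfolding cell_def by simp
      have e2: "\<lfloor>real K * frac (real n * \<alpha> i)\<rfloor> \<ge> 0" "\<lfloor>real K * frac (real n1 * \<alpha> i)\<rfloor> \<ge> 0"
        using Kpos by (simp_all add: frac_ge_0)
      have "\<lfloor>real K * frac (real n * \<alpha> i)\<rfloor> = \<lfloor>real K * frac (real n1 * \<alpha> i)\<rfloor>"
        using e1 eq_nat_nat_iff[OF e2] by simp
      then have cl: "\<bar>frac (real n * \<alpha> i) - frac (real n1 * \<alpha> i)\<bar> < 1 / real K"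
        by (rule floor_eq_close[OF Kpos])
      have "real x * \<alpha> i - of_int (\<lfloor>real n * \<alpha> i\<rfloor> - \<lfloor>real n1 * \<alpha> i\<rfloor>)
            = frac (real n * \<alpha> i) - frac (real n1 * \<alpha> i)"
        using \<open>n1 < n\<close> by (simp add: x frac_def of_nat_diff algebra_simps)
      then have "normT (real x * \<alpha> i) \<le> \<bar>frac (real n * \<alpha> i) - frac (real n1 * \<alpha> i)\<bar>"
        using normT_le_int[of "real x * \<alpha> i" "\<lfloor>real n * \<alpha> i\<rfloor> - \<lfloor>real n1 * \<alpha> i\<rfloor>"] by simp
      with cl show ?thesis by simp
    qed
    then show "x \<in> Good" unfolding Good_def using x1 by auto
  qed
  have inj: "inj_on (\<lambda>n. n - n1) (F - {n1})"
    by (intro inj_onI) (use n1le in fastforce)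
  have "card (F - {n1}) \<le> card Good"
    using card_mono[OF _ sub] card_image[OF inj] unfolding Good_def by simp
  moreover have "card (F - {n1}) = card F - 1" using n1F finF by simp
  moreover have "card F \<ge> 1" using \<open>F \<noteq> {}\<close> finF by (simp add: Suc_leI card_gt_0_iff)
  ultimately have "real (card Good) \<ge> real (card F) - 1" by linarith
  then show ?thesis using cF unfolding Good_def F_def by linarith
qed

lemma G_nonneg: "G y \<ge> 0" unfolding G_def using cos_ge_minus_one[of "2*pi*y"] by (smt (verit) divide_nonneg_pos)
lemma G_le1: "G y \<le> 1" unfolding G_def using cos_le_one[of "2*pi*y"] by simp

lemma G_ge: "normT y \<le> a \<Longrightarrow> a \<le> 1/2 \<Longrightarrow> G y \<ge> G a"
  unfolding G_def using cos_normT_ge[of y a] by simp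

lemma G_le: "a < normT y \<Longrightarrow> 0 \<le> a \<Longrightarrow> G y \<le> G a"
  unfolding G_def using cos_normT_less[of a y] by simp

lemma prod_le_factor:
  fixes f :: "nat \<Rightarrow> real"
  assumes "j < t" "\<And>i. 0 \<le> f i" "\<And>i. f i \<le> 1"
  shows "(\<Prod>i<t. f i) \<le> f j"
proof -
  have "(\<Prod>i<t. f i) = f j * (\<Prod>i\<in>{..<t} - {j}. f i)" using assms(1) by (intro prod.remove) auto
  also have "\<dots> \<le> f j * 1"
    using assms by (intro mult_left_mono prod_le_1) auto
  finally show ?thesis by simp
qed

lemma part1:
  fixes t :: nat and \<alpha> :: "nat \<Rightarrow> real" and \<epsilon> :: real
  assumes "\<epsilon> > 0"
  shows "\<exists>M::nat. M > 0 \<and> (\<forall>\<beta>. normS_le \<beta> (bohr t \<alpha> \<epsilon>) (1/6) \<longrightarrow> \<beta> \<in> genM t \<alpha> M)"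
proof -
  define e0 where "e0 = min \<epsilon> (1/4)"
  have e0: "0 < e0" "e0 \<le> \<epsilon>" "e0 \<le> 1/4" using assms by (auto simp: e0_def)
  define q where "q = G e0"
  have "cos (2*pi*e0) < cos 0" using e0 by (intro cos_monotone_0_pi) auto
  then have q1: "q < 1" by (simp add: q_def G_def)
  have "pi * (4*e0) \<le> pi * 1" using e0(3) pi_gt_zero by (intro mult_left_mono) auto
  then have "2*pi*e0 \<le> pi/2" by simp
  moreover have "0 \<le> 2*pi*e0" using e0(1) pi_gt_zero by simp
  ultimately have "cos (2*pi*e0) \<ge> 0" using cos_ge_zero[of "2*pi*e0"] by linarith
  then have q0: "q > 0" by (simp add: q_def G_def)
  have lim: "(\<lambda>K. G (1 / real K) ^ t) \<longlonglongrightarrow> G 0 ^ t"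
    unfolding G_def by (intro tendsto_intros lim_inverse_n') simp
  have "G 0 ^ t = 1" by (simp add: G_def)
  then have ev1: "eventually (\<lambda>K. G (1 / real K) ^ t > q) sequentially"
    using lim q1 by (intro order_tendstoD(1)) auto
  have ev2: "eventually (\<lambda>K. 1 / real K < e0) sequentially"
    using lim_inverse_n' e0(1) by (intro order_tendstoD(2)) auto
  obtain K :: nat where K: "K \<ge> 1" "G (1 / real K) ^ t > q" "1 / real K < e0"
    using eventually_conj[OF eventually_ge_at_top[of 1] eventually_conj[OF ev1 ev2]]
    unfolding eventually_sequentially by auto
  define p where "p = G (1 / real K)"
  have p0: "p \<ge> 0" by (simp add: p_def G_nonneg)
  have r1: "p ^ t / q > 1" using K(2) q0 unfolding p_def by simp
  obtain m0 where m0: "2 * real K ^ t < (p ^ t / q) ^ m0" using real_arch_pow[OF r1] by blast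
  define m where "m = Suc m0"
  have "(p ^ t / q) ^ m0 \<le> (p ^ t / q) ^ m" unfolding m_def using r1 by (intro power_increasing) auto
  with m0 have "2 * real K ^ t < (p ^ t) ^ m / q ^ m" by (simp add: power_divide)
  then have "2 * real K ^ t * q ^ m < (p ^ t) ^ m" using q0 by (simp add: field_simps)
  moreover have pm: "(p ^ t) ^ m = (p ^ m) ^ t" by (simp add: power_mult[symmetric] mult.commute)
  ultimately have key: "2 * real K ^ t * q ^ m < (p ^ m) ^ t" by simp
  have Kpos: "real K > 0" using K by simp
  define a where "a = (p ^ m) ^ t / (2 * real K ^ t) - q ^ m"
  have a0: "a > 0" using key Kpos unfolding a_def by (simp add: field_simps)
  have "\<beta> \<in> genM t \<alpha> m" if hb: "normS_le \<beta> (bohr t \<alpha> \<epsilon>) (1/6)" for \<beta>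
  proof (rule ccontr)
    assume nb: "\<beta> \<notin> genM t \<alpha> m"
    obtain L where L: "\<forall>n. ev L n = complex_of_real (\<Prod>i<t. G (real n * \<alpha> i) ^ m)"
      "\<forall>p\<in>set L. \<exists>k::nat\<Rightarrow>int. (\<forall>i<t. \<bar>k i\<bar> \<le> int m) \<and> snd p = (\<Sum>i<t. of_int (k i) * \<alpha> i)"
      using phi_ev by blast
    have nint: "\<forall>p\<in>set L. snd p - \<beta> \<notin> \<int>"
    proof
      fix pp assume pp: "pp \<in> set L"
      obtain k :: "nat \<Rightarrow> int" where k: "\<forall>i<t. \<bar>k i\<bar> \<le> int m" "snd pp = (\<Sum>i<t. of_int (k i) * \<alpha> i)"
        using L(2) pp by blast
      show "snd pp - \<beta> \<notin> \<int>"
      proof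
        assume "snd pp - \<beta> \<in> \<int>"
        then have "- (snd pp - \<beta>) \<in> \<int>" by (rule Ints_minus)
        then have "\<beta> - (\<Sum>i<t. of_int (k i) * \<alpha> i) \<in> \<int>" using k(2) by simp
        then have "\<beta> \<in> genM t \<alpha> m" unfolding genM_def using k(1) by blast
        with nb show False by simp
      qed
    qed
    define C where "C = (\<Sum>p\<leftarrow>L. cmod (fst p) * (2 / cmod (1 - cis (2*pi*(snd p - \<beta>)))))"
    define phi where "phi n = (\<Prod>i<t. G (real n * \<alpha> i) ^ m)" for n :: nat
    have phi0: "phi n \<ge> 0" for n unfolding phi_def by (intro prod_nonneg) (simp add: G_nonneg)
    define Good where "Good N = {n \<in> {1..<N}. \<forall>i<t. normT (real n * \<alpha> i) \<le> 1 / real K}" for N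
    have termb: "phi n * cos (2*pi*(real n * \<beta>)) \<ge> (if n \<in> Good N then (p ^ m) ^ t / 2 else 0) - q ^ m"
      for n N
    proof (cases "n \<ge> 1 \<and> (\<forall>i<t. normT (real n * \<alpha> i) \<le> \<epsilon>)")
      case True
      then have "n \<in> bohr t \<alpha> \<epsilon>" by (simp add: bohr_def)
      then have "normT (real n * \<beta>) \<le> 1/6" using hb unfolding normS_le_def by auto
      then have c: "cos (2*pi*(real n * \<beta>)) \<ge> 1/2" using normT_sixth_iff by blast
      then have ge: "phi n * cos (2*pi*(real n * \<beta>)) \<ge> phi n / 2"
        using phi0[of n] mult_left_mono[OF c phi0[of n]] by simp
      have qm: "q ^ m \<ge> 0" using q0 by simp
      show ?thesis
      proof (cases "n \<in> Good N")
        case True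
        have "phi n \<ge> (\<Prod>i<t. p ^ m)" unfolding phi_def
        proof (intro prod_mono conjI)
          fix i assume "i \<in> {..<t}"
          then have "normT (real n * \<alpha> i) \<le> 1 / real K" using True by (simp add: Good_def)
          moreover have "1 / real K \<le> 1/2" using K(3) e0 by simp
          ultimately have "G (real n * \<alpha> i) \<ge> p" unfolding p_def by (rule G_ge)
          then show "p ^ m \<le> G (real n * \<alpha> i) ^ m" using p0 by (intro power_mono) auto
        qed (use p0 in simp)
        then have "phi n \<ge> (p ^ m) ^ t" by simp
        then show ?thesis using True ge qm by simp
      next
        case False then show ?thesis using ge qm phi0[of n] by simp
      qed
    next
      case False
      show ?thesis
      proof (cases "n = 0")
        case True
        then have "n \<notin> Good N" by (simp add: Good_def)
        moreover have "q ^ m \<ge> 0" using q0 by simp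
        ultimately show ?thesis using True phi0[of n] by simp
      next
        case n0: False
        then obtain j where j: "j < t" "normT (real n * \<alpha> j) > \<epsilon>" using False by auto
        then have "n \<notin> Good N" using K(3) e0 unfolding Good_def by force
        have "G (real n * \<alpha> j) \<le> q" unfolding q_def using j e0 by (intro G_le) auto
        then have "G (real n * \<alpha> j) ^ m \<le> q ^ m" using G_nonneg by (intro power_mono) auto
        moreover have "phi n \<le> G (real n * \<alpha> j) ^ m" unfolding phi_def
          using j(1) by (intro prod_le_factor) (auto simp: G_nonneg G_le1 power_le_one)
        ultimately have "phi n \<le> q ^ m" by simp
        moreover have "phi n * cos (2*pi*(real n * \<beta>)) \<ge> - phi n"
          using phi0[of n] mult_left_mono[OF cos_ge_minus_one phi0[of n]] by simp
        ultimately show ?thesis using \<open>n \<notin> Good N\<close> by simp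
      qed
    qed
    have bound: "real N * a - (p ^ m) ^ t / 2 \<le> C" for N
    proof -
      define S where "S = (\<Sum>n<N. ev L n * cis (- (2*pi*real n*\<beta>)))"
      have "Re S = (\<Sum>n<N. phi n * cos (2*pi*(real n * \<beta>)))"
      proof -
        have "Re (ev L n * cis (- (2*pi*real n*\<beta>))) = phi n * cos (2*pi*(real n * \<beta>))" for n
        proof -
          have "ev L n = complex_of_real (phi n)" using L(1) unfolding phi_def by simp
          then show ?thesis by (simp add: algebra_simps)
        qed
        then show ?thesis unfolding S_def Re_sum by simp
      qed
      also have "\<dots> \<ge> (\<Sum>n<N. (if n \<in> Good N then (p ^ m) ^ t / 2 else 0) - q ^ m)"
        by (intro sum_mono termb)
      also have "(\<Sum>n<N. (if n \<in> Good N then (p ^ m) ^ t / 2 else 0) - q ^ m)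
          = real (card (Good N)) * ((p ^ m) ^ t / 2) - real N * q ^ m"
      proof -
        have "(\<Sum>n<N. (if n \<in> Good N then (p ^ m) ^ t / 2 else 0)) = (\<Sum>n\<in>{..<N} \<inter> Good N. (p ^ m) ^ t / 2)"
          by (rule sum.inter_restrict[symmetric]) simp
        also have "{..<N} \<inter> Good N = Good N" by (auto simp: Good_def)
        finally show ?thesis by (simp add: sum_subtractf)
      qed
      finally have reS: "Re S \<ge> real (card (Good N)) * ((p ^ m) ^ t / 2) - real N * q ^ m" .
      have cg: "real (card (Good N)) \<ge> real N / real K ^ t - 1"
        unfolding Good_def using pigeon_count[OF K(1)] by blast
      have pp0: "(p ^ m) ^ t / 2 \<ge> 0" using p0 by simp
      have "real N * a - (p ^ m) ^ t / 2 = (real N / real K ^ t - 1) * ((p ^ m) ^ t / 2) - real N * q ^ m"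
        unfolding a_def using Kpos by (simp add: field_simps)
      also have "\<dots> \<le> real (card (Good N)) * ((p ^ m) ^ t / 2) - real N * q ^ m"
        using mult_right_mono[OF cg pp0] by simp
      also have "\<dots> \<le> Re S" by (rule reS)
      also have "\<dots> \<le> cmod S" by (rule complex_Re_le_cmod)
      also have "\<dots> \<le> C" unfolding S_def C_def by (rule corr_bound[OF nint])
      finally show ?thesis .
    qed
    obtain N :: nat where "(C + (p ^ m) ^ t / 2) / a < real N" using reals_Archimedean2 by blast
    then have "C + (p ^ m) ^ t / 2 < real N * a" using a0 by (simp add: field_simps)
    with bound[of N] show False by simp
  qed
  then show ?thesis unfolding m_def by blast
qed


lemma openT_shift_nat: "openT V \<Longrightarrow> x \<in> V \<longleftrightarrow> x + real k \<in> V"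
proof (induction k arbitrary: x)
  case 0 then show ?case by simp
next
  case (Suc k)
  have e: "x + real (Suc k) = (x + real k) + 1" by simp
  have h1: "(x + real k) \<in> V \<longleftrightarrow> (x + real k) + 1 \<in> V" using Suc.prems unfolding openT_def by blast
  have h2: "x \<in> V \<longleftrightarrow> x + real k \<in> V" using Suc.IH Suc.prems by blast
  show ?case unfolding e using h1 h2 by blast
qed

lemma openT_shift_int: "openT V \<Longrightarrow> x \<in> V \<longleftrightarrow> x + of_int k \<in> V"
proof (cases "k \<ge> 0")
  case True
  assume o: "openT V"
  have e: "of_int k = real (nat k)" using True by simp
  show ?thesis unfolding e by (rule openT_shift_nat[OF o])
next
  case False
  assume o: "openT V"
  have e: "x + of_int k + real (nat (-k)) = x" using False by simp
  have "x + of_int k \<in> V \<longleftrightarrow> x + of_int k + real (nat (-k)) \<in> V" by (rule openT_shift_nat[OF o])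
  then show ?thesis unfolding e by blast
qed

lemma cos_shift_int: "cos (2*pi*(real n * (b + of_int k))) = cos (2*pi*(real n * b))"
proof -
  have "2*pi*(real n * (b + of_int k)) = 2*pi*(real n * b) + of_int (int n * k) * (2*pi)"
    by (simp add: algebra_simps)
  then show ?thesis using cos.plus_of_int[of "2*pi*(real n * b)" "int n * k"] by simp
qed

lemma normS_le_iff: "normS_le b S (1/6) \<longleftrightarrow> (\<forall>n\<in>S. cos (2*pi*(real n * b)) \<ge> 1/2)"
  unfolding normS_le_def normT_sixth_iff ..

lemma part2:
  assumes hM: "\<forall>\<beta>. normS_le \<beta> (bohr t \<alpha> \<epsilon>) (1/6) \<longrightarrow> \<beta> \<in> genM t \<alpha> M"
    and oV: "openT V" and sub: "genM t \<alpha> M \<subseteq> V"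
  shows "\<exists>N::nat. N > 0 \<and> (\<forall>\<beta>. normS_le \<beta> (bohrN t \<alpha> N \<epsilon>) (1/6) \<longrightarrow> \<beta> \<in> V)"
proof (rule ccontr)
  assume "\<not> ?thesis"
  note nt = this
  have "\<exists>\<beta>. normS_le \<beta> (bohrN t \<alpha> (Suc N) \<epsilon>) (1/6) \<and> \<beta> \<notin> V" for N
  proof -
    have "\<not> (\<forall>\<beta>. normS_le \<beta> (bohrN t \<alpha> (Suc N) \<epsilon>) (1/6) \<longrightarrow> \<beta> \<in> V)"
      using nt zero_less_Suc[of N] by blast
    then show ?thesis by blast
  qed
  then have "\<forall>N. \<exists>\<beta>. normS_le \<beta> (bohrN t \<alpha> (Suc N) \<epsilon>) (1/6) \<and> \<beta> \<notin> V" by blast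
  then obtain b0 where b0a: "\<forall>N. normS_le (b0 N) (bohrN t \<alpha> (Suc N) \<epsilon>) (1/6) \<and> b0 N \<notin> V"
    by (rule choice[THEN exE])
  have b0: "\<And>N. normS_le (b0 N) (bohrN t \<alpha> (Suc N) \<epsilon>) (1/6)" "\<And>N. b0 N \<notin> V"
    using b0a by auto
  define b where "b N = b0 N + of_int (- \<lfloor>b0 N\<rfloor>)" for N
  have bS: "normS_le (b N) (bohrN t \<alpha> (Suc N) \<epsilon>) (1/6)" for N
    using b0(1)[of N] unfolding b_def normS_le_iff cos_shift_int .
  have bV: "b N \<notin> V" for N
    using b0(2)[of N] openT_shift_int[OF oV, of "b0 N" "- \<lfloor>b0 N\<rfloor>"] unfolding b_def by simp
  have b01: "b N \<in> {0..1}" for N unfolding b_def by simp linarith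
  have sc: "seq_compact {0..1::real}" by (rule compact_imp_seq_compact) simp
  have "\<exists>l\<in>{0..1}. \<exists>r. strict_mono r \<and> (b \<circ> r) \<longlonglongrightarrow> l"
    by (rule seq_compact_def[THEN iffD1, OF sc, rule_format, OF b01])
  then obtain l r where l: "l \<in> {0..1}" "strict_mono r" "(b \<circ> r) \<longlonglongrightarrow> l"
    by blast
  have "normS_le l (bohr t \<alpha> \<epsilon>) (1/6)"
    unfolding normS_le_iff
  proof
    fix n assume n: "n \<in> bohr t \<alpha> \<epsilon>"
    have "(\<lambda>j. cos (2*pi*(real n * (b \<circ> r) j))) \<longlonglongrightarrow> cos (2*pi*(real n * l))"
      by (intro tendsto_intros l(3))
    moreover have "\<exists>N. \<forall>j\<ge>N. 1/2 \<le> cos (2*pi*(real n * (b \<circ> r) j))"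
    proof (intro exI allI impI)
      fix j assume "n \<le> j"
      then have "n \<le> Suc (r j)" using seq_suble[OF l(2), of j] by simp
      then have "n \<in> bohrN t \<alpha> (Suc (r j)) \<epsilon>" using n by (simp add: bohrN_def)
      then show "1/2 \<le> cos (2*pi*(real n * (b \<circ> r) j))" using bS[of "r j"] unfolding normS_le_iff by simp
    qed
    ultimately show "1/2 \<le> cos (2*pi*(real n * l))" by (rule LIMSEQ_le_const)
  qed
  then have lV: "l \<in> V" using hM sub by blast
  have oV': "open V" using oV by (simp add: openT_def)
  have "eventually (\<lambda>j. (b \<circ> r) j \<in> V) sequentially"
    by (rule topological_tendstoD[OF l(3) oV' lV])
  then obtain j where "(b \<circ> r) j \<in> V" by (metis eventually_sequentially order_refl)
  with bV show False by simp
qed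

theorem lemma4:
  fixes t :: nat and \<alpha> :: "nat \<Rightarrow> real" and \<epsilon> :: real
  assumes "\<epsilon> > 0"
  shows "(\<exists>M::nat. M > 0 \<and> (\<forall>\<beta>. normS_le \<beta> (bohr t \<alpha> \<epsilon>) (1/6) \<longrightarrow> \<beta> \<in> genM t \<alpha> M))
       \<and> (\<forall>M::nat. M > 0 \<and> (\<forall>\<beta>. normS_le \<beta> (bohr t \<alpha> \<epsilon>) (1/6) \<longrightarrow> \<beta> \<in> genM t \<alpha> M) \<longrightarrow>
            (\<forall>V. openT V \<and> genM t \<alpha> M \<subseteq> V \<longrightarrow>
               (\<exists>N::nat. N > 0 \<and> (\<forall>\<beta>. normS_le \<beta> (bohrN t \<alpha> N \<epsilon>) (1/6) \<longrightarrow> \<beta> \<in> V))))"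
proof (intro conjI allI impI)
  show "\<exists>M::nat. M > 0 \<and> (\<forall>\<beta>. normS_le \<beta> (bohr t \<alpha> \<epsilon>) (1/6) \<longrightarrow> \<beta> \<in> genM t \<alpha> M)"
    by (rule part1[OF assms])
next
  fix M :: nat and V
  assume "0 < M \<and> (\<forall>\<beta>. normS_le \<beta> (bohr t \<alpha> \<epsilon>) (1/6) \<longrightarrow> \<beta> \<in> genM t \<alpha> M)"
    "openT V \<and> genM t \<alpha> M \<subseteq> V"
  then show "\<exists>N::nat. N > 0 \<and> (\<forall>\<beta>. normS_le \<beta> (bohrN t \<alpha> N \<epsilon>) (1/6) \<longrightarrow> \<beta> \<in> V)"
    by (intro part2) auto
qed

end
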